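(* Let $N\geq 2$ and let $\Sigma$ be the two-sided shift on $\{0,1,\dots,N-1\}^{\mathbb{Z}}$, ordered lexicographically as described below. Then $\Sigma$ has no forbidden order patterns of length $L\leq N-1$, and $\Sigma$ has forbidden order patterns of every length $L\geq N+2$.
   Context: $\{0,1,\dots,N-1\}^{\mathbb{Z}}$ is the set of bisequences $\omega=(\omega_n)_{n\in\mathbb{Z}}$ with $\omega_n\in\{0,\dots,N-1\}$, and $\Sigma(\omega)_n=\omega_{n+1}$. One-sided sequences are compared lexicographically ($(a_0,a_1,\dots)<(b_0,b_1,\dots)$ iff at the first index $n$ where they differ, $a_n<b_n$). The order on bisequences: $\omega<\omega'$ iff $(\omega_0,\omega_1,\dots)<(\omega'_0,\omega'_1,\dots)$, or these right sequences are equal and $(\omega_{-1},\omega_{-2},\dots)<(\omega'_{-1},\omega'_{-2},\dots)$. $\mathcal{S}_L$ is the set of permutations $\pi=[\pi_0,\dots,\pi_{L-1}]$ of $\{0,\dots,L-1\}$. $\omega$ defines $\pi$ if $\Sigma^{\pi_0}(\omega)<\dots<\Sigma^{\pi_{L-1}}(\omega)$; $\pi$ is forbidden if no bisequence defines it. *)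

theory Defs
  imports Main
begin

definition bisequences :: "nat \<Rightarrow> (int \<Rightarrow> nat) set" where
  "bisequences N = {\<omega>. \<forall>n. \<omega> n < N}"

definition shift :: "(int \<Rightarrow> nat) \<Rightarrow> (int \<Rightarrow> nat)" where
  "shift \<omega> = (\<lambda>n. \<omega> (n + 1))"

definition lex_less :: "(nat \<Rightarrow> nat) \<Rightarrow> (nat \<Rightarrow> nat) \<Rightarrow> bool" where
  "lex_less a b \<longleftrightarrow> (\<exists>n. (\<forall>m<n. a m = b m) \<and> a n < b n)"

definition right_seq :: "(int \<Rightarrow> nat) \<Rightarrow> nat \<Rightarrow> nat" where
  "right_seq \<omega> = (\<lambda>n. \<omega> (int n))"

definition left_seq :: "(int \<Rightarrow> nat) \<Rightarrow> nat \<Rightarrow> nat" where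
  "left_seq \<omega> = (\<lambda>n. \<omega> (- int n - 1))"

definition bi_less :: "(int \<Rightarrow> nat) \<Rightarrow> (int \<Rightarrow> nat) \<Rightarrow> bool" where
  "bi_less \<omega> \<omega>' \<longleftrightarrow> lex_less (right_seq \<omega>) (right_seq \<omega>') \<or>
     (right_seq \<omega> = right_seq \<omega>' \<and> lex_less (left_seq \<omega>) (left_seq \<omega>'))"

definition perms :: "nat \<Rightarrow> nat list set" where
  "perms L = {\<pi>. distinct \<pi> \<and> set \<pi> = {0..<L}}"

definition defines_pattern :: "(int \<Rightarrow> nat) \<Rightarrow> nat list \<Rightarrow> bool" where
  "defines_pattern \<omega> \<pi> \<longleftrightarrow>
     (\<forall>i. Suc i < length \<pi> \<longrightarrow> bi_less ((shift ^^ (\<pi> ! i)) \<omega>) ((shift ^^ (\<pi> ! Suc i)) \<omega>))"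

definition forbidden :: "nat \<Rightarrow> nat list \<Rightarrow> bool" where
  "forbidden N \<pi> \<longleftrightarrow> \<not> (\<exists>\<omega>\<in>bisequences N. defines_pattern \<omega> \<pi>)"

end

theory Submission
  imports Defs
begin

lemma shift_pow: "(shift ^^ k) w = (\<lambda>n. w (n + int k))"
  by (induction k) (auto simp: shift_def algebra_simps)

lemma lex_irrefl: "\<not> lex_less a a"
  by (auto simp: lex_less_def)

lemma lex_trans: "lex_less a b \<Longrightarrow> lex_less b c \<Longrightarrow> lex_less a c"
  unfolding lex_less_def
proof (elim exE conjE)
  fix n1 n2
  assume h1: "\<forall>m<n1. a m = b m" "a n1 < b n1" and h2: "\<forall>m<n2. b m = c m" "b n2 < c n2"
  show "\<exists>n. (\<forall>m<n. a m = c m) \<and> a n < c n"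
  proof (cases "n1 < n2")
    case True then show ?thesis using h1 h2 by (intro exI[of _ n1]) auto
  next
    case False
    show ?thesis
    proof (cases "n1 = n2")
      case True then show ?thesis using h1 h2 by (intro exI[of _ n1]) auto
    next
      case f: False
      with False have "n2 < n1" by simp
      then show ?thesis using h1 h2 by (intro exI[of _ n2]) auto
    qed
  qed
qed

lemma bi_irrefl: "\<not> bi_less a a"
  by (auto simp: bi_less_def lex_irrefl)

lemma bi_trans: "bi_less a b \<Longrightarrow> bi_less b c \<Longrightarrow> bi_less a c"
  unfolding bi_less_def using lex_trans by metis

lemma bi_asym: "bi_less a b \<Longrightarrow> \<not> bi_less b a"
  using bi_trans bi_irrefl by blast

lemma bi_le0: "bi_less a b \<Longrightarrow> a 0 \<le> b 0"
proof -
  assume "bi_less a b"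
  then consider "lex_less (right_seq a) (right_seq b)" | "right_seq a = right_seq b"
    by (auto simp: bi_less_def)
  then show ?thesis
  proof cases
    case 1
    then obtain n where n: "\<forall>m<n. right_seq a m = right_seq b m" "right_seq a n < right_seq b n"
      by (auto simp: lex_less_def)
    show ?thesis
    proof (cases n)
      case 0 then show ?thesis using n by (simp add: right_seq_def)
    next
      case (Suc k) then show ?thesis using n(1)[rule_format, of 0] by (simp add: right_seq_def)
    qed
  next
    case 2
    then have "right_seq a 0 = right_seq b 0" by simp
    then show ?thesis by (simp add: right_seq_def)
  qed
qed

lemma bi_shift: assumes e: "a 0 = b 0" and l: "bi_less a b" shows "bi_less (shift a) (shift b)"
proof -
  have rs: "right_seq (shift x) = (\<lambda>n. right_seq x (Suc n))" for x
    by (auto simp: right_seq_def shift_def algebra_simps)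
  have ls0: "left_seq (shift x) 0 = x 0" for x by (simp add: left_seq_def shift_def)
  have lsS: "left_seq (shift x) (Suc n) = left_seq x n" for x n
    unfolding left_seq_def shift_def by (rule arg_cong[where f=x]) simp
  from l consider "lex_less (right_seq a) (right_seq b)"
    | "right_seq a = right_seq b" "lex_less (left_seq a) (left_seq b)"
    by (auto simp: bi_less_def)
  then show ?thesis
  proof cases
    case 1
    then obtain n where n: "\<forall>m<n. right_seq a m = right_seq b m" "right_seq a n < right_seq b n"
      by (auto simp: lex_less_def)
    have "n \<noteq> 0" using n e by (cases n) (auto simp: right_seq_def)
    then obtain k where k: "n = Suc k" by (cases n) auto
    have "lex_less (right_seq (shift a)) (right_seq (shift b))"
      unfolding lex_less_def rs using n k by (intro exI[of _ k]) auto
    then show ?thesis by (simp add: bi_less_def)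
  next
    case 2
    then obtain n where n: "\<forall>m<n. left_seq a m = left_seq b m" "left_seq a n < left_seq b n"
      by (auto simp: lex_less_def)
    have "\<forall>m<Suc n. left_seq (shift a) m = left_seq (shift b) m"
    proof (intro allI impI)
      fix m assume "m < Suc n"
      then show "left_seq (shift a) m = left_seq (shift b) m"
        using n e by (cases m) (auto simp: ls0 lsS)
    qed
    moreover have "left_seq (shift a) (Suc n) < left_seq (shift b) (Suc n)"
      using n by (simp add: lsS)
    ultimately have "lex_less (left_seq (shift a)) (left_seq (shift b))"
      unfolding lex_less_def by blast
    moreover have "right_seq (shift a) = right_seq (shift b)" using 2 rs by simp
    ultimately show ?thesis by (simp add: bi_less_def)
  qed
qed

definition zz :: "nat \<Rightarrow> nat \<Rightarrow> nat" where
  "zz N a = (if 2*a \<le> N then N - 2*a else 2*a - N - 1)"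

lemma zz_succ:
  assumes "a < N"
  shows "\<exists>b b'. b' < b \<and> b \<le> N+1 \<and> zz N b = Suc (zz N a) \<and> zz N b' = Suc (zz N (Suc a))"
proof -
  consider "2*(a+1) \<le> N" | "N = 2*a" | "N = 2*a+1" | "2*a > N" by atomize_elim presburger
  then show ?thesis
  proof cases
    case 1 then show ?thesis using assms
      by (intro exI[of _ "N-a+1"] exI[of _ "N-a"]) (simp add: zz_def split: if_split; arith)
  next
    case 2 then show ?thesis using assms
      by (intro exI[of _ "a+1"] exI[of _ "a-1"]) (simp add: zz_def split: if_split; arith)
  next
    case 3 then show ?thesis using assms
      by (intro exI[of _ "a+2"] exI[of _ "a"]) (simp add: zz_def split: if_split; arith)
  next
    case 4 then show ?thesis using assms
      by (intro exI[of _ "N-a"] exI[of _ "N-a-1"]) (simp add: zz_def split: if_split; arith)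
  qed
qed

definition gL :: "nat \<Rightarrow> nat \<Rightarrow> nat" where
  "gL N a = (if a < N+2 then zz N a else a)"

lemma gL_inj: "inj_on (gL N) {0..<L}"
  unfolding inj_on_def gL_def zz_def by (auto split: if_splits) presburger+

lemma gL_sub: "L \<ge> N+2 \<Longrightarrow> gL N ` {0..<L} \<subseteq> {0..<L}"
  by (auto simp: gL_def zz_def)

lemma gL_perm: assumes "L \<ge> N+2" shows "map (gL N) [0..<L] \<in> perms L"
proof -
  have "gL N ` {0..<L} = {0..<L}"
    by (rule endo_inj_surj) (auto simp: gL_inj gL_sub[OF assms])
  then show ?thesis unfolding perms_def by (auto simp: distinct_map gL_inj)
qed

lemma forb:
  assumes "N \<ge> 2" "L \<ge> N+2"
  shows "forbidden N (map (gL N) [0..<L])"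
  unfolding forbidden_def
proof
  assume "\<exists>w\<in>bisequences N. defines_pattern w (map (gL N) [0..<L])"
  then obtain w where w: "\<forall>n. w n < N" and d: "defines_pattern w (map (gL N) [0..<L])"
    by (auto simp: bisequences_def)
  define X where "X k = (shift ^^ k) w" for k
  define Y where "Y i = X (zz N i)" for i
  have Y0: "Y i 0 = w (int (zz N i))" for i by (simp add: Y_def X_def shift_pow)
  have XS: "shift (X k) = X (Suc k)" for k by (simp add: X_def)
  have step: "bi_less (Y i) (Y (Suc i))" if "i < N+1" for i
  proof -
    have "Suc i < length (map (gL N) [0..<L])" using that assms by simp
    with d have "bi_less ((shift ^^ (map (gL N) [0..<L] ! i)) w) ((shift ^^ (map (gL N) [0..<L] ! Suc i)) w)"
      by (auto simp: defines_pattern_def)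
    then show ?thesis using that assms by (simp add: Y_def X_def gL_def)
  qed
  have chain: "bi_less (Y i) (Y j)" if "i < j" "j \<le> N+1" for i j
    using that
  proof (induction j)
    case 0 then show ?case by simp
  next
    case (Suc j)
    show ?case
    proof (cases "i = j")
      case True then show ?thesis using step Suc by simp
    next
      case False
      then have "bi_less (Y i) (Y j)" using Suc by simp
      moreover have "bi_less (Y j) (Y (Suc j))" using step Suc by simp
      ultimately show ?thesis using bi_trans by blast
    qed
  qed
  have strict: "w (int (zz N a)) < w (int (zz N (Suc a)))" if aN: "a < N" for a
  proof -
    have l: "bi_less (Y a) (Y (Suc a))" using step that by simp
    have "w (int (zz N a)) \<le> w (int (zz N (Suc a)))" using bi_le0[OF l] by (simp add: Y0)
    moreover have "w (int (zz N a)) \<noteq> w (int (zz N (Suc a)))"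
    proof
      assume e: "w (int (zz N a)) = w (int (zz N (Suc a)))"
      have "bi_less (shift (Y a)) (shift (Y (Suc a)))"
        by (rule bi_shift[OF _ l]) (simp add: Y0 e)
      then have l2: "bi_less (X (Suc (zz N a))) (X (Suc (zz N (Suc a))))"
        by (simp add: Y_def XS)
      obtain b b' where bb: "b' < b" "b \<le> N+1" "zz N b = Suc (zz N a)" "zz N b' = Suc (zz N (Suc a))"
        using zz_succ[OF aN] by blast
      have "bi_less (Y b) (Y b')" using l2 bb by (simp add: Y_def)
      moreover have "bi_less (Y b') (Y b)" using chain bb by simp
      ultimately show False using bi_asym by blast
    qed
    ultimately show ?thesis by simp
  qed
  have ge: "a \<le> w (int (zz N a))" if "a \<le> N" for a
    using that
  proof (induction a)
    case 0 then show ?case by simp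
  next
    case (Suc a) then show ?case using strict[of a] by simp
  qed
  have "N \<le> w (int (zz N N))" using ge by simp
  with w show False using leD by blast
qed

lemma realize:
  assumes "\<pi> \<in> perms L" "L \<le> N - 1" "N \<ge> 2"
  shows "\<not> forbidden N \<pi>"
proof -
  have dist: "distinct \<pi>" and st: "set \<pi> = {0..<L}" using assms(1) by (auto simp: perms_def)
  have len: "length \<pi> = L" using distinct_card[OF dist] st by simp
  have inj: "inj_on (nth \<pi>) {..<L}" using dist len by (simp add: inj_on_nth)
  define f where "f = inv_into {..<L} (nth \<pi>)"
  define w where "w n = (if 0 \<le> n \<and> n < int L then f (nat n) else 0)" for n :: int
  have fb: "f x < L" if "x < L" for x
  proof -
    have "x \<in> set \<pi>" using that st by simp
    then obtain i where i: "i < L" "\<pi> ! i = x" using len by (auto simp: in_set_conv_nth)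
    then have "x \<in> (nth \<pi>) ` {..<L}" by (intro rev_image_eqI[of i]) simp_all
    then have "f x \<in> {..<L}" unfolding f_def by (rule inv_into_into)
    then show ?thesis by simp
  qed
  have wb: "w \<in> bisequences N"
    unfolding bisequences_def
  proof (intro CollectI allI)
    fix n
    show "w n < N"
    proof (cases "0 \<le> n \<and> n < int L")
      case True
      then have "nat n < L" by linarith
      then have "f (nat n) < L" by (rule fb)
      then show ?thesis using True assms(2,3) unfolding w_def by simp
    next
      case False then show ?thesis using assms(3) unfolding w_def by auto
    qed
  qed
  have wi: "w (int (\<pi> ! i)) = i" if "i < L" for i
  proof -
    have "\<pi> ! i \<in> set \<pi>" using that len by simp
    then have lt: "\<pi> ! i < L" using st by auto
    have "f (\<pi> ! i) = i" unfolding f_def using inj that by (intro inv_into_f_f) simp_all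
    then show ?thesis using lt unfolding w_def by simp
  qed
  have "defines_pattern w \<pi>"
    unfolding defines_pattern_def
  proof (intro allI impI)
    fix i assume i: "Suc i < length \<pi>"
    have a: "right_seq ((shift ^^ k) w) 0 = w (int k)" for k
      by (simp add: right_seq_def shift_pow)
    have "lex_less (right_seq ((shift ^^ (\<pi> ! i)) w)) (right_seq ((shift ^^ (\<pi> ! Suc i)) w))"
      unfolding lex_less_def
    proof (intro exI[of _ 0] conjI)
      show "right_seq ((shift ^^ (\<pi> ! i)) w) 0 < right_seq ((shift ^^ (\<pi> ! Suc i)) w) 0"
        unfolding a using i len wi[of i] wi[of "Suc i"] by simp
    qed simp
    then show "bi_less ((shift ^^ (\<pi> ! i)) w) ((shift ^^ (\<pi> ! Suc i)) w)"
      by (simp add: bi_less_def)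
  qed
  with wb show ?thesis by (auto simp: forbidden_def)
qed

theorem proposition6:
  fixes N :: nat
  assumes "N \<ge> 2"
  shows "(\<forall>L. 1 \<le> L \<and> L \<le> N - 1 \<longrightarrow> (\<forall>\<pi>\<in>perms L. \<not> forbidden N \<pi>)) \<and>
         (\<forall>L. L \<ge> N + 2 \<longrightarrow> (\<exists>\<pi>\<in>perms L. forbidden N \<pi>))"
proof (intro conjI allI impI ballI)
  fix L \<pi> assume "1 \<le> L \<and> L \<le> N - 1" "\<pi> \<in> perms L"
  then show "\<not> forbidden N \<pi>" using realize[OF _ _ assms] by blast
next
  fix L :: nat assume "L \<ge> N + 2"
  then show "\<exists>\<pi>\<in>perms L. forbidden N \<pi>" using forb[OF assms] gL_perm by blast
qed

end
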